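(* The set $\mathbb{N}$ is not a minimal additive complement to any set $W \subseteq \mathbb{Z}$.
   Context: $\mathbb{N}$ denotes the set of nonnegative integers. For $X, Y \subseteq \mathbb{Z}$, $X + Y = \{x + y : x \in X, y \in Y\}$. A set $C \subseteq \mathbb{Z}$ is an additive complement to $W \subseteq \mathbb{Z}$ if $C + W = \mathbb{Z}$; it is a minimal additive complement to $W$ if moreover no proper subset of $C$ is an additive complement to $W$. *)

theory Defs
  imports Main
begin

definition sumset :: "int set \<Rightarrow> int set \<Rightarrow> int set" where
  "sumset X Y = {x + y | x y. x \<in> X \<and> y \<in> Y}"

definition additive_complement :: "int set \<Rightarrow> int set \<Rightarrow> bool" where
  "additive_complement C W \<longleftrightarrow> sumset C W = UNIV"

definition minimal_additive_complement :: "int set \<Rightarrow> int set \<Rightarrow> bool" where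
  "minimal_additive_complement C W \<longleftrightarrow>
     additive_complement C W \<and> (\<forall>C'. C' \<subset> C \<longrightarrow> \<not> additive_complement C' W)"

end

theory Submission
  imports Defs
begin

theorem proposition2:
  fixes W :: "int set"
  shows "\<not> minimal_additive_complement (int ` UNIV) W"
proof
  assume H: "minimal_additive_complement (int ` UNIV) W"
  hence A: "sumset (int ` UNIV) W = UNIV" and
    B: "\<forall>C'. C' \<subset> int ` UNIV \<longrightarrow> \<not> additive_complement C' W"
    unfolding minimal_additive_complement_def additive_complement_def by auto
  have sub: "int ` UNIV - {0} \<subset> int ` UNIV" by force
  have "sumset (int ` UNIV - {0}) W = UNIV"
  proof (rule set_eqI, rule iffI)
    fix z :: int
    have "z - 1 \<in> sumset (int ` UNIV) W" using A by auto
    then obtain n w where nw: "z - 1 = int n + w" "w \<in> W"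
      unfolding sumset_def by auto
    have "int (Suc n) \<in> int ` UNIV - {0}" by (metis DiffI UNIV_I image_eqI of_nat_neq_0 singletonD)
    moreover have "z = int (Suc n) + w" using nw by simp
    ultimately show "z \<in> sumset (int ` UNIV - {0}) W"
      unfolding sumset_def using nw(2) by blast
  qed simp
  thus False using B sub unfolding additive_complement_def by blast
qed

end
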